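(* Let $\mathcal{G}$ be a connected undirected graph with $n$ nodes, $m$ edges and incidence matrix $B$; let $p\ge1$, $E=\begin{bmatrix} I_{p}\\ \mathbf{0}_{(n-p)\times p}\end{bmatrix}$, $d\in\mathbb{R}^n$, $Q=\operatorname{diag}(q_1,\dots,q_p)$ with $q_i>0$, $r\in\mathbb{R}^p$, $s\in\mathbb{R}$ and $C(u)=\frac12u^TQu+r^Tu+s$. Let $h(x)=(h_1(x_1),\dots,h_n(x_n))^T$, let $B_c\in\mathbb{R}^{n\times l}$ be the incidence matrix of a (not necessarily connected) graph on the same node set, let $E_c\in\mathbb{R}^{n\times p_c}$ be a matrix whose columns are distinct standard unit vectors of $\mathbb{R}^n$, let $\gamma:\mathbb{R}^l\to\mathbb{R}^l$ and $\eta:\mathbb{R}^{p_c}\to\mathbb{R}^{p_c}$ act componentwise, and define $\Psi(x)=-B_c\gamma(B_c^Th(x))-E_c\eta(E_c^Th(x))$. Fix $\overline x\in\mathbb{R}^n$. Then the solution (in the variable $u$) of $$\min_{u,\lambda}C(u)\quad\text{subject to}\quad\mathbf{0}=\Psi(\overline x)-B\lambda+Eu-d$$ is given by $\hat u=Q^{-1}(\hat\kappa-r)$, where $\hat\kappa=E^T\frac{\mathbb{1}_n\mathbb{1}_n^T}{\mathbb{1}_p^TQ^{-1}\mathbb{1}_p}(\hat d+EQ^{-1}r)$ and $\hat d=d+E_c\eta(E_c^Th(\overline x))$.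
   Context: $\mathbb{1}_k$ is the all-ones vector of length $k$. An incidence matrix is obtained by arbitrarily orienting each edge: entry $(i,k)$ is $+1$ if node $i$ is the positive end of edge $k$, $-1$ if the negative end, $0$ otherwise. "Acts componentwise" means $\gamma(a)=(\gamma_1(a_1),\dots,\gamma_l(a_l))^T$ and similarly for $\eta$. *)

theory Defs
  imports Main "HOL-Library.Multiset" Complex_Main
begin

text \<open>Vectors in R^k are functions nat => real, only indices < k are meaningful.
  Matrices are functions nat => nat => real (row, column).
  A graph on nodes 0..n-1 is given by a list of edges (a,b); the order (a,b)
  fixes the (arbitrary) orientation used for the incidence matrix.\<close>

definition graph_on :: "nat \<Rightarrow> (nat \<times> nat) list \<Rightarrow> bool" where
  "graph_on n es \<longleftrightarrow>
     (\<forall>e\<in>set es. fst e < n \<and> snd e < n \<and> fst e \<noteq> snd e) \<and>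
     distinct (map (\<lambda>e. {fst e, snd e}) es)"

definition graph_connected :: "nat \<Rightarrow> (nat \<times> nat) list \<Rightarrow> bool" where
  "graph_connected n es \<longleftrightarrow>
     (\<forall>i<n. \<forall>j<n. (\<lambda>a b. (a, b) \<in> set es \<or> (b, a) \<in> set es)\<^sup>*\<^sup>* i j)"

definition incidence :: "(nat \<times> nat) list \<Rightarrow> nat \<Rightarrow> nat \<Rightarrow> real" where
  "incidence es i k = (if fst (es ! k) = i then 1 else if snd (es ! k) = i then -1 else 0)"

text \<open>E_c: column k is the standard unit vector e_(c k).\<close>
definition unit_columns :: "nat \<Rightarrow> nat \<Rightarrow> (nat \<Rightarrow> nat) \<Rightarrow> bool" where
  "unit_columns n pc c \<longleftrightarrow> (\<forall>k<pc. c k < n) \<and> inj_on c {..<pc}"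

definition sel_matrix :: "(nat \<Rightarrow> nat) \<Rightarrow> nat \<Rightarrow> nat \<Rightarrow> real" where
  "sel_matrix c i k = (if c k = i then 1 else 0)"

text \<open>E = [I_p; 0] (n x p)\<close>
definition Emat :: "nat \<Rightarrow> nat \<Rightarrow> real" where
  "Emat i j = (if i = j then 1 else 0)"

definition mv :: "(nat \<Rightarrow> nat \<Rightarrow> real) \<Rightarrow> nat \<Rightarrow> (nat \<Rightarrow> real) \<Rightarrow> nat \<Rightarrow> real" where
  "mv A nc v = (\<lambda>i. \<Sum>j<nc. A i j * v j)"

definition mtv :: "(nat \<Rightarrow> nat \<Rightarrow> real) \<Rightarrow> nat \<Rightarrow> (nat \<Rightarrow> real) \<Rightarrow> nat \<Rightarrow> real" where
  "mtv A nr v = (\<lambda>j. \<Sum>i<nr. A i j * v i)"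

definition cw :: "(nat \<Rightarrow> real \<Rightarrow> real) \<Rightarrow> (nat \<Rightarrow> real) \<Rightarrow> nat \<Rightarrow> real" where
  "cw f v = (\<lambda>i. f i (v i))"

definition Psi :: "nat \<Rightarrow> (nat \<times> nat) list \<Rightarrow> nat \<Rightarrow> (nat \<Rightarrow> nat)
    \<Rightarrow> (nat \<Rightarrow> real \<Rightarrow> real) \<Rightarrow> (nat \<Rightarrow> real \<Rightarrow> real) \<Rightarrow> (nat \<Rightarrow> real \<Rightarrow> real)
    \<Rightarrow> (nat \<Rightarrow> real) \<Rightarrow> nat \<Rightarrow> real" where
  "Psi n esc pc c h \<gamma> \<eta> x = (\<lambda>i.
      - mv (incidence esc) (length esc) (cw \<gamma> (mtv (incidence esc) n (cw h x))) i
      - mv (sel_matrix c) pc (cw \<eta> (mtv (sel_matrix c) n (cw h x))) i)"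

definition Qmat :: "(nat \<Rightarrow> real) \<Rightarrow> nat \<Rightarrow> nat \<Rightarrow> real" where
  "Qmat q i j = (if i = j then q i else 0)"

definition Qinv :: "(nat \<Rightarrow> real) \<Rightarrow> nat \<Rightarrow> nat \<Rightarrow> real" where
  "Qinv q i j = (if i = j then 1 / q i else 0)"

definition cost :: "nat \<Rightarrow> (nat \<Rightarrow> real) \<Rightarrow> (nat \<Rightarrow> real) \<Rightarrow> real \<Rightarrow> (nat \<Rightarrow> real) \<Rightarrow> real" where
  "cost p q r s u = 1/2 * (\<Sum>i<p. u i * mv (Qmat q) p u i) + (\<Sum>i<p. r i * u i) + s"

definition feasible :: "nat \<Rightarrow> (nat \<times> nat) list \<Rightarrow> nat \<Rightarrow> (nat \<Rightarrow> real) \<Rightarrow> (nat \<Rightarrow> real)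
    \<Rightarrow> (nat \<Rightarrow> real) \<Rightarrow> (nat \<Rightarrow> real) \<Rightarrow> bool" where
  "feasible n es p psi d u lam \<longleftrightarrow>
     (\<forall>i<n. 0 = psi i - mv (incidence es) (length es) lam i + mv Emat p u i - d i)"

definition dhat :: "nat \<Rightarrow> nat \<Rightarrow> (nat \<Rightarrow> nat) \<Rightarrow> (nat \<Rightarrow> real \<Rightarrow> real) \<Rightarrow> (nat \<Rightarrow> real \<Rightarrow> real)
    \<Rightarrow> (nat \<Rightarrow> real) \<Rightarrow> (nat \<Rightarrow> real) \<Rightarrow> nat \<Rightarrow> real" where
  "dhat n pc c h \<eta> d xbar = (\<lambda>i.
      d i + mv (sel_matrix c) pc (cw \<eta> (mtv (sel_matrix c) n (cw h xbar))) i)"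

definition kappa_hat :: "nat \<Rightarrow> nat \<Rightarrow> (nat \<Rightarrow> real) \<Rightarrow> (nat \<Rightarrow> real) \<Rightarrow> (nat \<Rightarrow> real) \<Rightarrow> nat \<Rightarrow> real" where
  "kappa_hat n p q r dh =
     mtv Emat n
       (mv (\<lambda>i j. 1 / (\<Sum>a<p. \<Sum>b<p. Qinv q a b)) n
          (\<lambda>k. dh k + mv Emat p (mv (Qinv q) p r) k))"

definition u_hat :: "nat \<Rightarrow> (nat \<Rightarrow> real) \<Rightarrow> (nat \<Rightarrow> real) \<Rightarrow> (nat \<Rightarrow> real) \<Rightarrow> nat \<Rightarrow> real" where
  "u_hat p q r \<kappa> = mv (Qinv q) p (\<lambda>i. \<kappa> i - r i)"

end

theory Submission
  imports Defs
begin


lemma mv_add: "mv A nc (\<lambda>j. x j + y j) i = mv A nc x i + mv A nc y i"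
  by (simp add: mv_def sum.distrib distrib_left)
lemma mv_scale: "mv A nc (\<lambda>j. a * x j) i = a * mv A nc x i"
  by (simp add: mv_def sum_distrib_left mult_ac)
lemma mv_neg: "mv A nc (\<lambda>j. - x j) i = - mv A nc x i"
  by (simp add: mv_def sum_negf)
lemma mv_sum: "mv A nc (\<lambda>j. \<Sum>t\<in>T. f t j) i = (\<Sum>t\<in>T. mv A nc (f t) i)"
  by (simp add: mv_def sum_distrib_left sum.swap[of _ T])

lemma sum_mv: "(\<Sum>i<n. mv A nc v i) = (\<Sum>j<nc. v j * (\<Sum>i<n. A i j))"
  unfolding mv_def by (subst sum.swap) (simp add: sum_distrib_left mult_ac)

lemma inc_colsum:
  assumes "graph_on n es" "k < length es"
  shows "(\<Sum>i<n. incidence es i k) = 0"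
proof -
  obtain a b where e: "es ! k = (a,b)" by (cases "es ! k") auto
  have "(a,b) \<in> set es" using assms(2) e nth_mem by metis
  then have ab: "a < n" "b < n" "a \<noteq> b" using assms(1) unfolding graph_on_def by auto
  have "\<And>i. incidence es i k = (if i = a then 1 else 0) - (if i = b then 1 else 0)"
    using ab e by (auto simp: incidence_def)
  then show ?thesis using ab by (simp add: sum_subtractf)
qed

lemma sel_colsum:
  assumes "c k < n" shows "(\<Sum>i<n. sel_matrix c i k) = 1"
  using assms by (simp add: sel_matrix_def)

lemma edge_range:
  assumes "graph_on n es" "(a,b) \<in> set es"
  shows "\<exists>lam. \<forall>i<n. (if i = a then 1 else 0) - (if i = b then 1 else (0::real)) = mv (incidence es) (length es) lam i"
proof -
  obtain k where k: "k < length es" "es ! k = (a,b)" using assms(2) by (metis in_set_conv_nth)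
  have ab: "a \<noteq> b" using assms unfolding graph_on_def by auto
  have "\<forall>i<n. (if i = a then 1 else 0) - (if i = b then 1 else (0::real)) = mv (incidence es) (length es) (\<lambda>j. if j = k then 1 else 0) i"
  proof (intro allI impI)
    fix i assume "i < n"
    have "mv (incidence es) (length es) (\<lambda>j. if j = k then 1 else 0) i = (\<Sum>j<length es. if j = k then incidence es i j else 0)"
      unfolding mv_def by (intro sum.cong) auto
    also have "\<dots> = incidence es i k" using k(1) by simp
    finally show "(if i = a then 1 else 0) - (if i = b then 1 else (0::real)) = mv (incidence es) (length es) (\<lambda>j. if j = k then 1 else 0) i"
      using k ab by (auto simp: incidence_def)
  qed
  then show ?thesis by blast
qed

lemma path_range:
  assumes "graph_on n es" "(\<lambda>a b. (a, b) \<in> set es \<or> (b, a) \<in> set es)\<^sup>*\<^sup>* x y"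
  shows "\<exists>lam. \<forall>i<n. (if i = x then 1 else 0) - (if i = y then 1 else (0::real)) = mv (incidence es) (length es) lam i"
  using assms(2)
proof (induction rule: rtranclp_induct)
  case base
  show ?case by (rule exI[of _ "\<lambda>_. 0"]) (simp add: mv_def)
next
  case (step y z)
  obtain l1 where l1: "\<forall>i<n. (if i = x then 1 else 0) - (if i = y then 1 else (0::real)) = mv (incidence es) (length es) l1 i"
    using step.IH by blast
  obtain l2 where l2: "\<forall>i<n. (if i = y then 1 else 0) - (if i = z then 1 else (0::real)) = mv (incidence es) (length es) l2 i"
  proof -
    from step.hyps(2) show ?thesis
    proof
      assume "(y,z) \<in> set es" then show ?thesis using edge_range[OF assms(1)] that by blast
    next
      assume "(z,y) \<in> set es"
      then obtain l where l: "\<forall>i<n. (if i = z then 1 else 0) - (if i = y then 1 else (0::real)) = mv (incidence es) (length es) l i"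
        using edge_range[OF assms(1)] by blast
      show ?thesis
      proof (rule that[of "\<lambda>j. - l j"], intro allI impI)
        fix i assume "i < n"
        with l have "(if i = z then 1 else 0) - (if i = y then 1 else (0::real)) = mv (incidence es) (length es) l i" by blast
        then show "(if i = y then 1 else 0) - (if i = z then 1 else (0::real)) = mv (incidence es) (length es) (\<lambda>j. - l j) i"
          by (simp add: mv_neg)
      qed
    qed
  qed
  show ?case
  proof (rule exI[of _ "\<lambda>j. l1 j + l2 j"], intro allI impI)
    fix i assume "i < n"
    with l1 l2 show "(if i = x then 1 else 0) - (if i = z then 1 else (0::real)) = mv (incidence es) (length es) (\<lambda>j. l1 j + l2 j) i"
      by (simp only: mv_add) (metis (no_types, lifting) diff_add_cancel add_diff_eq)
  qed
qed

lemma range_B: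
  assumes "graph_on n es" "graph_connected n es" "0 < n" "(\<Sum>i<n. w i) = 0"
  shows "\<exists>lam. \<forall>i<n. w i = mv (incidence es) (length es) lam i"
proof -
  have "\<forall>j<n. \<exists>lam. \<forall>i<n. (if i = j then 1 else 0) - (if i = 0 then 1 else (0::real)) = mv (incidence es) (length es) lam i"
    using path_range[OF assms(1)] assms(2,3) unfolding graph_connected_def by blast
  then obtain L where L: "\<forall>j<n. \<forall>i<n. (if i = j then 1 else 0) - (if i = 0 then 1 else (0::real)) = mv (incidence es) (length es) (L j) i"
    by metis
  have "\<forall>i<n. w i = mv (incidence es) (length es) (\<lambda>k. \<Sum>j<n. w j * L j k) i"
  proof (intro allI impI)
    fix i assume i: "i < n"
    have "mv (incidence es) (length es) (\<lambda>k. \<Sum>j<n. w j * L j k) i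
        = (\<Sum>j<n. w j * ((if i = j then 1 else 0) - (if i = 0 then 1 else (0::real))))"
      using L i by (simp add: mv_sum mv_scale)
    also have "\<dots> = (\<Sum>j<n. (if i = j then w j else 0) - w j * (if i = 0 then 1 else 0))"
      by (intro sum.cong) auto
    also have "\<dots> = w i - (\<Sum>j<n. w j) * (if i = 0 then 1 else 0)"
      using i by (simp only: sum_subtractf sum_distrib_right) simp
    finally show "w i = mv (incidence es) (length es) (\<lambda>k. \<Sum>j<n. w j * L j k) i"
      using assms(4) by simp
  qed
  then show ?thesis by blast
qed



lemma sum_restrict_lt:
  assumes "p \<le> (n::nat)"
  shows "(\<Sum>j<n. if j < p then f j else (0::real)) = (\<Sum>j<p. f j)"
proof -
  have "{..<n} \<inter> {j. j < p} = {..<p}" using assms by auto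
  then show ?thesis by (simp add: sum.If_cases)
qed

lemma Emv: "mv Emat p u i = (if i < p then u i else 0)"
proof -
  have "mv Emat p u i = (\<Sum>j<p. if i = j then u j else 0)"
    unfolding mv_def Emat_def by (intro sum.cong) auto
  then show ?thesis by simp
qed

lemma Qinv_mv: "i < p \<Longrightarrow> mv (Qinv q) p u i = u i / q i"
proof -
  assume "i < p"
  have "mv (Qinv q) p u i = (\<Sum>j<p. if i = j then u j / q i else 0)"
    unfolding mv_def Qinv_def by (intro sum.cong) auto
  then show ?thesis using \<open>i < p\<close> by simp
qed

lemma Qmat_mv: "i < p \<Longrightarrow> mv (Qmat q) p u i = q i * u i"
proof -
  assume "i < p"
  have "mv (Qmat q) p u i = (\<Sum>j<p. if i = j then q i * u j else 0)"
    unfolding mv_def Qmat_def by (intro sum.cong) auto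
  then show ?thesis using \<open>i < p\<close> by simp
qed

lemma cost_eq: "cost p q r s u = (\<Sum>i<p. q i * (u i)^2 / 2 + r i * u i) + s"
proof -
  have "(\<Sum>i<p. u i * mv (Qmat q) p u i) = (\<Sum>i<p. q i * (u i)^2)"
    by (rule sum.cong) (auto simp: Qmat_mv power2_eq_square)
  then show ?thesis unfolding cost_def
    by (simp add: sum.distrib sum_distrib_left sum_divide_distrib)
qed

theorem lemma8:
  fixes n m p l pc :: nat
    and es esc :: "(nat \<times> nat) list"
    and c :: "nat \<Rightarrow> nat"
    and d q r xbar :: "nat \<Rightarrow> real"
    and s :: real
    and h \<gamma> \<eta> :: "nat \<Rightarrow> real \<Rightarrow> real"
  assumes "graph_on n es" and "graph_connected n es" and "length es = m"
    and "graph_on n esc" and "length esc = l"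
    and "1 \<le> p" and "p \<le> n"
    and "\<forall>i<p. q i > 0"
    and "unit_columns n pc c"
  shows
    "(let psi = Psi n esc pc c h \<gamma> \<eta> xbar;
          uh = u_hat p q r (kappa_hat n p q r (dhat n pc c h \<eta> d xbar))
      in (\<exists>lam. feasible n es p psi d uh lam) \<and>
         (\<forall>u lam. feasible n es p psi d u lam \<longrightarrow>
             cost p q r s uh \<le> cost p q r s u \<and>
             (cost p q r s u = cost p q r s uh \<longrightarrow> (\<forall>i<p. u i = uh i))))"
proof -
  define psi where "psi = Psi n esc pc c h \<gamma> \<eta> xbar"
  define dh where "dh = dhat n pc c h \<eta> d xbar"
  define S where "S = (\<Sum>a<p. 1 / q a)"
  define K where "K = ((\<Sum>k<n. dh k) + (\<Sum>k<p. r k / q k)) / S"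
  define uh where "uh = u_hat p q r (kappa_hat n p q r dh)"
  have "0 \<in> {..<p}" using assms(6) by simp
  then have ne: "{..<p} \<noteq> {}" by blast
  have Spos: "S > 0" unfolding S_def
    using assms(8) ne by (intro sum_pos) auto
  have SQ: "(\<Sum>a<p. \<Sum>b<p. Qinv q a b) = S" unfolding S_def
    by (rule sum.cong) (auto simp: Qinv_def)
  have kap: "kappa_hat n p q r dh j = K" if j: "j < n" for j
  proof -
    have "(\<Sum>k<n. dh k + mv Emat p (mv (Qinv q) p r) k)
          = (\<Sum>k<n. dh k) + (\<Sum>k<n. if k < p then r k / q k else 0)"
      by (simp add: sum.distrib Emv Qinv_mv cong: if_cong)
    also have "\<dots> = (\<Sum>k<n. dh k) + (\<Sum>k<p. r k / q k)"
      using sum_restrict_lt[OF assms(7)] by simp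
    finally have e: "(\<Sum>k<n. dh k + mv Emat p (mv (Qinv q) p r) k) = (\<Sum>k<n. dh k) + (\<Sum>k<p. r k / q k)" .
    have "kappa_hat n p q r dh j = (\<Sum>k<n. 1 / S * (dh k + mv Emat p (mv (Qinv q) p r) k))"
    proof -
      have "kappa_hat n p q r dh j = (\<Sum>i<n. if i = j then mv (\<lambda>i j. 1 / S) n (\<lambda>k. dh k + mv Emat p (mv (Qinv q) p r) k) i else 0)"
        unfolding kappa_hat_def mtv_def SQ Emat_def by (intro sum.cong) auto
      also have "\<dots> = mv (\<lambda>i j. 1 / S) n (\<lambda>k. dh k + mv Emat p (mv (Qinv q) p r) k) j"
        using j by simp
      finally show ?thesis by (simp add: mv_def)
    qed
    also have "\<dots> = K" unfolding K_def using e
      by (simp add: sum_divide_distrib[symmetric])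
    finally show ?thesis .
  qed
  have uhv: "uh i = (K - r i) / q i" if i: "i < p" for i
    unfolding uh_def u_hat_def using i assms(7) kap by (simp add: Qinv_mv)
  have sumuh: "(\<Sum>i<p. uh i) = (\<Sum>k<n. dh k)"
  proof -
    have "(\<Sum>i<p. uh i) = (\<Sum>i<p. K * (1 / q i) - r i / q i)"
      by (rule sum.cong) (auto simp: uhv diff_divide_distrib)
    also have "\<dots> = K * S - (\<Sum>i<p. r i / q i)"
      by (simp add: sum_subtractf sum_distrib_left S_def)
    also have "\<dots> = (\<Sum>k<n. dh k)" unfolding K_def using Spos by simp
    finally show ?thesis .
  qed
  have incsum: "(\<Sum>i<n. mv (incidence es') (length es') v i) = 0" if "graph_on n es'" for es' v
    unfolding sum_mv using inc_colsum[OF that] by simp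
  have selsum: "(\<Sum>i<n. mv (sel_matrix c) pc v i) = (\<Sum>k<pc. v k)" for v
    unfolding sum_mv using sel_colsum assms(9) unfolding unit_columns_def by simp
  have sumpsi: "(\<Sum>i<n. psi i) = (\<Sum>k<n. d k) - (\<Sum>k<n. dh k)"
    unfolding psi_def dh_def Psi_def dhat_def
    by (simp add: sum_subtractf sum_negf sum.distrib incsum[OF assms(4)] selsum)
  have feas_sum: "(\<Sum>i<p. u i) = (\<Sum>k<n. dh k)" if "feasible n es p psi d u lam" for u lam
  proof -
    from that have "\<forall>i<n. 0 = psi i - mv (incidence es) (length es) lam i + mv Emat p u i - d i"
      unfolding feasible_def .
    then have "(\<Sum>i<n. (0::real)) = (\<Sum>i<n. psi i - mv (incidence es) (length es) lam i + mv Emat p u i - d i)"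
      by (intro sum.cong) auto
    then have "0 = (\<Sum>i<n. psi i) - 0 + (\<Sum>i<n. if i < p then u i else 0) - (\<Sum>i<n. d i)"
      by (simp add: sum_subtractf sum.distrib incsum[OF assms(1)] Emv)
    then show ?thesis using sumpsi sum_restrict_lt[OF assms(7)] by simp
  qed
  have ex: "\<exists>lam. feasible n es p psi d uh lam"
  proof -
    define w where "w = (\<lambda>i. psi i + mv Emat p uh i - d i)"
    have "(\<Sum>i<n. w i) = 0" unfolding w_def
      using sumpsi sumuh sum_restrict_lt[OF assms(7)]
      by (simp add: sum_subtractf sum.distrib Emv)
    then obtain lam where "\<forall>i<n. w i = mv (incidence es) (length es) lam i"
      using range_B[OF assms(1,2)] assms(6,7) by fastforce
    then have "feasible n es p psi d uh lam" unfolding feasible_def w_def by auto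
    then show ?thesis by blast
  qed
  have opt: "cost p q r s uh \<le> cost p q r s u \<and>
             (cost p q r s u = cost p q r s uh \<longrightarrow> (\<forall>i<p. u i = uh i))"
    if f: "feasible n es p psi d u lam" for u lam
  proof -
    have su: "(\<Sum>i<p. u i) = (\<Sum>i<p. uh i)" using feas_sum[OF f] sumuh by simp
    have trm: "q i * (u i)^2 / 2 + r i * u i - (q i * (uh i)^2 / 2 + r i * uh i)
        = q i * (u i - uh i)^2 / 2 + K * (u i - uh i)" if i: "i < p" for i
    proof -
      have "q i > 0" using assms(8) i by auto
      then have KK: "K = q i * uh i + r i" using uhv[OF i] by simp
      show ?thesis unfolding KK by (simp add: power2_eq_square field_simps)
    qed
    have "cost p q r s u - cost p q r s uh = (\<Sum>i<p. q i * (u i - uh i)^2 / 2 + K * (u i - uh i))"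
      unfolding cost_eq using trm by (simp add: sum_subtractf[symmetric])
    also have "\<dots> = (\<Sum>i<p. q i * (u i - uh i)^2 / 2)"
      using su by (simp add: sum.distrib sum_distrib_left[symmetric] sum_subtractf)
    finally have D: "cost p q r s u - cost p q r s uh = (\<Sum>i<p. q i * (u i - uh i)^2 / 2)" .
    have nn: "\<forall>i\<in>{..<p}. q i * (u i - uh i)^2 / 2 \<ge> 0" using assms(8) by auto
    have "cost p q r s uh \<le> cost p q r s u" proof -
      have "0 \<le> (\<Sum>i<p. q i * (u i - uh i)^2 / 2)" using nn by (intro sum_nonneg) auto
      then show ?thesis using D by linarith
    qed
    moreover have "\<forall>i<p. u i = uh i" if "cost p q r s u = cost p q r s uh"
    proof (intro allI impI)
      fix i assume i: "i < p"
      have "(\<Sum>i<p. q i * (u i - uh i)^2 / 2) = 0" using D that by simp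
      moreover have "finite {..<p}" by simp
      ultimately have "\<forall>x\<in>{..<p}. q x * (u x - uh x)^2 / 2 = 0"
        using sum_nonneg_eq_0_iff[of "{..<p}" "\<lambda>i. q i * (u i - uh i)^2 / 2"] nn by blast
      then have "q i * (u i - uh i)^2 / 2 = 0" using i by blast
      moreover have "q i \<noteq> 0" using assms(8) i by force
      ultimately have "(u i - uh i)^2 = 0" by simp
      then show "u i = uh i" by simp
    qed
    ultimately show ?thesis by blast
  qed
  show ?thesis unfolding Let_def psi_def[symmetric] dh_def[symmetric] uh_def[symmetric]
    using ex opt by blast
qed

end
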